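(* Let $K\le P$ be positive integers, $\theta=(K,P)$, and suppose $p(\theta)>0$. Then for every $n\ge3$, $$\frac{\mathbb{E}[T_n(\theta)]}{\mathbb{E}[T_n(p(\theta))]}=\frac{C_{\rm K}(\theta)}{p(\theta)}=1+\frac{q(\theta)^2-r(\theta)}{(1-q(\theta))^3}\,q(\theta)\ \ge 1,$$ with equality if and only if $P<2K$; moreover, if $2K\le P<3K$ this ratio equals $1+\big(q(\theta)/(1-q(\theta))\big)^3$.
   Context: Random key graph: each of $n$ nodes receives independently a uniformly random $K$-element subset of $\{1,\dots,P\}$, distinct nodes being adjacent iff their subsets intersect; $T_n(\theta)$ is its number of triangles. $q(\theta)=\binom{P-K}{K}/\binom{P}{K}$ if $2K\le P$ and $0$ otherwise; $p(\theta)=1-q(\theta)$ (the edge probability); $r(\theta)=\binom{P-2K}{K}/\binom{P}{K}$ if $3K\le P$ and $0$ otherwise; $\beta(\theta)=(1-q)^3+q^3-qr$; $C_{\rm K}(\theta)=\beta(\theta)/(1-q(\theta))^2$. $T_n(p)$ is the number of triangles of the Erdős–Rényi graph $\mathbb{G}(n;p)$ (edges independent with probability $p$), whose clustering coefficient is $C_{\rm ER}(p)=p$. *)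

theory Defs
  imports "HOL-Probability.Probability"
begin

definition q_rkg :: "nat \<Rightarrow> nat \<Rightarrow> real" where
  "q_rkg K P = (if 2 * K \<le> P then real ((P - K) choose K) / real (P choose K) else 0)"

definition p_rkg :: "nat \<Rightarrow> nat \<Rightarrow> real" where
  "p_rkg K P = 1 - q_rkg K P"

definition r_rkg :: "nat \<Rightarrow> nat \<Rightarrow> real" where
  "r_rkg K P = (if 3 * K \<le> P then real ((P - 2 * K) choose K) / real (P choose K) else 0)"

definition beta_rkg :: "nat \<Rightarrow> nat \<Rightarrow> real" where
  "beta_rkg K P = (1 - q_rkg K P) ^ 3 + q_rkg K P ^ 3 - q_rkg K P * r_rkg K P"

definition CK_rkg :: "nat \<Rightarrow> nat \<Rightarrow> real" where
  "CK_rkg K P = beta_rkg K P / (1 - q_rkg K P) ^ 2"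

definition triangles :: "nat \<Rightarrow> (nat \<Rightarrow> nat \<Rightarrow> bool) \<Rightarrow> nat" where
  "triangles n adj = card {T. T \<subseteq> {0..<n} \<and> card T = 3 \<and>
                          (\<forall>x\<in>T. \<forall>y\<in>T. x \<noteq> y \<longrightarrow> adj x y)}"

definition key_pmf :: "nat \<Rightarrow> nat \<Rightarrow> nat \<Rightarrow> (nat \<Rightarrow> nat set) pmf" where
  "key_pmf n K P = Pi_pmf {0..<n} {} (\<lambda>_. pmf_of_set {S. S \<subseteq> {1..P} \<and> card S = K})"

definition rkg_adj :: "(nat \<Rightarrow> nat set) \<Rightarrow> nat \<Rightarrow> nat \<Rightarrow> bool" where
  "rkg_adj f i j \<longleftrightarrow> i \<noteq> j \<and> f i \<inter> f j \<noteq> {}"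

definition ET_rkg :: "nat \<Rightarrow> nat \<Rightarrow> nat \<Rightarrow> real" where
  "ET_rkg n K P = measure_pmf.expectation (key_pmf n K P) (\<lambda>f. real (triangles n (rkg_adj f)))"

definition er_pmf :: "nat \<Rightarrow> real \<Rightarrow> (nat set \<Rightarrow> bool) pmf" where
  "er_pmf n p = Pi_pmf {e. e \<subseteq> {0..<n} \<and> card e = 2} False (\<lambda>_. bernoulli_pmf p)"

definition er_adj :: "(nat set \<Rightarrow> bool) \<Rightarrow> nat \<Rightarrow> nat \<Rightarrow> bool" where
  "er_adj g i j \<longleftrightarrow> i \<noteq> j \<and> g {i, j}"

definition ET_er :: "nat \<Rightarrow> real \<Rightarrow> real" where
  "ET_er n p = measure_pmf.expectation (er_pmf n p) (\<lambda>g. real (triangles n (er_adj g)))"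

end

theory Submission
  imports Defs
begin


definition UU :: "nat \<Rightarrow> nat \<Rightarrow> nat set set" where
  "UU K P = {S. S \<subseteq> {1..P} \<and> card S = K}"

lemma finite_UU: "finite (UU K P)"
  unfolding UU_def by (rule finite_subset[of _ "Pow {1..P}"]) auto

lemma card_UU: "card (UU K P) = P choose K"
  unfolding UU_def using n_subsets[of "{1..P}" K] by simp

lemma UU_ne: assumes "K \<le> P" shows "UU K P \<noteq> {}"
proof -
  have "card (UU K P) > 0" using card_UU[of K P] assms by simp
  then show ?thesis by auto
qed

lemma card_disj1:
  assumes "x \<in> UU K P"
  shows "card {y \<in> UU K P. x \<inter> y = {}} = (P - K) choose K"
proof -
  have "{y \<in> UU K P. x \<inter> y = {}} = {y. y \<subseteq> {1..P} - x \<and> card y = K}"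
    unfolding UU_def by auto
  moreover have "card ({1..P} - x) = P - K"
  proof -
    have "x \<subseteq> {1..P}" "card x = K" using assms unfolding UU_def by auto
    moreover then have "finite x" using finite_subset by blast
    ultimately show ?thesis by (simp add: card_Diff_subset)
  qed
  ultimately show ?thesis using n_subsets[of "{1..P} - x" K] by simp
qed

lemma card_disj2:
  assumes "x \<in> UU K P" "y \<in> UU K P" "x \<inter> y = {}"
  shows "card {z \<in> UU K P. x \<inter> z = {} \<and> y \<inter> z = {}} = (P - 2*K) choose K"
proof -
  have "{z \<in> UU K P. x \<inter> z = {} \<and> y \<inter> z = {}} = {z. z \<subseteq> {1..P} - (x \<union> y) \<and> card z = K}"
    unfolding UU_def by auto
  moreover have "card (x \<union> y) = 2 * K"
  proof -
    have "x \<subseteq> {1..P}" "card x = K" "y \<subseteq> {1..P}" "card y = K" using assms unfolding UU_def by auto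
    moreover then have "finite x" "finite y" using finite_subset by blast+
    ultimately show ?thesis using assms(3) by (simp add: card_Un_disjoint)
  qed
  moreover have "card ({1..P} - (x \<union> y)) = P - card (x \<union> y)"
    using assms unfolding UU_def by (subst card_Diff_subset) (auto simp: finite_subset)
  ultimately show ?thesis using n_subsets[of "{1..P} - (x \<union> y)" K] by simp
qed

lemma sum_disj1:
  assumes "x \<in> UU K P"
  shows "(\<Sum>y\<in>UU K P. of_bool (x \<inter> y = {}) :: real) = real ((P - K) choose K)"
proof -
  have "UU K P \<inter> {y. x \<inter> y = {}} = {y \<in> UU K P. x \<inter> y = {}}" by auto
  then show ?thesis using card_disj1[OF assms] finite_UU by simp
qed

lemma sum_disj1':
  assumes "x \<in> UU K P"
  shows "(\<Sum>y\<in>UU K P. of_bool (y \<inter> x = {}) :: real) = real ((P - K) choose K)"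
  using sum_disj1[OF assms] by (simp only: Int_commute)

lemma sum_disj2:
  assumes "x \<in> UU K P" "y \<in> UU K P" "x \<inter> y = {}"
  shows "(\<Sum>z\<in>UU K P. of_bool (x \<inter> z = {}) * of_bool (y \<inter> z = {}) :: real) = real ((P - 2*K) choose K)"
proof -
  have "UU K P \<inter> {z. x \<inter> z = {} \<and> y \<inter> z = {}} = {z \<in> UU K P. x \<inter> z = {} \<and> y \<inter> z = {}}" by auto
  then show ?thesis using card_disj2[OF assms] finite_UU
    by (simp flip: of_bool_conj)
qed

lemma count_main:
  fixes K P :: nat
  defines "N \<equiv> real (P choose K)" and "M \<equiv> real ((P - K) choose K)" and "R \<equiv> real ((P - 2*K) choose K)"
  shows "(\<Sum>x\<in>UU K P. \<Sum>y\<in>UU K P. \<Sum>z\<in>UU K P.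
           of_bool (x \<inter> y \<noteq> {} \<and> x \<inter> z \<noteq> {} \<and> y \<inter> z \<noteq> {}) :: real)
         = N^3 - 3 * N^2 * M + 3 * N * M^2 - N * M * R"
proof -
  let ?U = "UU K P"
  define d where "d = (\<lambda>x y::nat set. of_bool (x \<inter> y = {}) :: real)"
  have id: "of_bool (x \<inter> y \<noteq> {} \<and> x \<inter> z \<noteq> {} \<and> y \<inter> z \<noteq> {}) =
     1 - d x y - d x z - d y z + d x y * d x z + d x y * d y z + d x z * d y z - d x y * (d x z * d y z)"
    for x y z by (simp add: d_def)
  have cU: "real (card ?U) = N" by (simp add: card_UU N_def)
  have s1: "(\<Sum>y\<in>?U. d x y) = M" if "x \<in> ?U" for x using sum_disj1[OF that] by (simp add: d_def M_def)
  have s1': "(\<Sum>x\<in>?U. d x y) = M" if "y \<in> ?U" for y using sum_disj1'[OF that] by (simp add: d_def M_def)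
  have s2: "d x y * (\<Sum>z\<in>?U. d x z * d y z) = d x y * R" if "x \<in> ?U" "y \<in> ?U" for x y
  proof (cases "x \<inter> y = {}")
    case True then show ?thesis using sum_disj2[OF that True] by (simp add: d_def R_def)
  next
    case False
    then show ?thesis by (simp add: d_def)
  qed
  have T1: "(\<Sum>x\<in>?U. \<Sum>y\<in>?U. \<Sum>z\<in>?U. (1::real)) = N^3" using cU by (simp add: power3_eq_cube)
  have T2: "(\<Sum>x\<in>?U. \<Sum>y\<in>?U. \<Sum>z\<in>?U. d x y) = N^2 * M"
    using cU s1 by (simp add: power2_eq_square sum_distrib_left[symmetric] mult.commute)
  have T3: "(\<Sum>x\<in>?U. \<Sum>y\<in>?U. \<Sum>z\<in>?U. d x z) = N^2 * M"
    using cU s1 by (simp add: power2_eq_square)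
  have T4: "(\<Sum>x\<in>?U. \<Sum>y\<in>?U. \<Sum>z\<in>?U. d y z) = N^2 * M"
    using cU s1 by (simp add: power2_eq_square)
  have T5: "(\<Sum>x\<in>?U. \<Sum>y\<in>?U. \<Sum>z\<in>?U. d x y * d x z) = N * M^2"
  proof -
    have "(\<Sum>x\<in>?U. \<Sum>y\<in>?U. \<Sum>z\<in>?U. d x y * d x z) = (\<Sum>x\<in>?U. (\<Sum>y\<in>?U. d x y) * (\<Sum>z\<in>?U. d x z))"
      by (simp add: sum_product)
    also have "\<dots> = (\<Sum>x\<in>?U. M * M)" using s1 by simp
    finally show ?thesis using cU by (simp add: power2_eq_square)
  qed
  have T6: "(\<Sum>x\<in>?U. \<Sum>y\<in>?U. \<Sum>z\<in>?U. d x y * d y z) = N * M^2"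
  proof -
    have "(\<Sum>x\<in>?U. \<Sum>y\<in>?U. \<Sum>z\<in>?U. d x y * d y z) = (\<Sum>x\<in>?U. \<Sum>y\<in>?U. d x y * (\<Sum>z\<in>?U. d y z))"
      by (simp add: sum_distrib_left)
    also have "\<dots> = (\<Sum>x\<in>?U. \<Sum>y\<in>?U. d x y * M)" using s1 by simp
    also have "\<dots> = (\<Sum>x\<in>?U. M * M)" using s1 by (simp add: sum_distrib_right[symmetric])
    finally show ?thesis using cU by (simp add: power2_eq_square)
  qed
  have T7: "(\<Sum>x\<in>?U. \<Sum>y\<in>?U. \<Sum>z\<in>?U. d x z * d y z) = N * M^2"
  proof -
    have "(\<Sum>x\<in>?U. \<Sum>y\<in>?U. \<Sum>z\<in>?U. d x z * d y z) = (\<Sum>x\<in>?U. \<Sum>z\<in>?U. \<Sum>y\<in>?U. d x z * d y z)"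
      by (rule sum.cong[OF refl], rule sum.swap)
    also have "\<dots> = (\<Sum>z\<in>?U. \<Sum>x\<in>?U. \<Sum>y\<in>?U. d x z * d y z)"
      by (rule sum.swap)
    also have "\<dots> = (\<Sum>z\<in>?U. (\<Sum>x\<in>?U. d x z) * (\<Sum>y\<in>?U. d y z))"
      by (simp add: sum_product)
    also have "\<dots> = (\<Sum>z\<in>?U. M * M)" using s1' by simp
    finally show ?thesis using cU by (simp add: power2_eq_square)
  qed
  have T8: "(\<Sum>x\<in>?U. \<Sum>y\<in>?U. \<Sum>z\<in>?U. d x y * (d x z * d y z)) = N * M * R"
  proof -
    have "(\<Sum>x\<in>?U. \<Sum>y\<in>?U. \<Sum>z\<in>?U. d x y * (d x z * d y z)) = (\<Sum>x\<in>?U. \<Sum>y\<in>?U. d x y * (\<Sum>z\<in>?U. d x z * d y z))"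
      by (simp add: sum_distrib_left)
    also have "\<dots> = (\<Sum>x\<in>?U. \<Sum>y\<in>?U. d x y * R)" using s2 by (intro sum.cong refl) simp
    also have "\<dots> = (\<Sum>x\<in>?U. M * R)" using s1 by (simp add: sum_distrib_right[symmetric])
    finally show ?thesis using cU by simp
  qed
  have "(\<Sum>x\<in>?U. \<Sum>y\<in>?U. \<Sum>z\<in>?U. of_bool (x \<inter> y \<noteq> {} \<and> x \<inter> z \<noteq> {} \<and> y \<inter> z \<noteq> {}) :: real)
     = (\<Sum>x\<in>?U. \<Sum>y\<in>?U. \<Sum>z\<in>?U. 1) - (\<Sum>x\<in>?U. \<Sum>y\<in>?U. \<Sum>z\<in>?U. d x y)
       - (\<Sum>x\<in>?U. \<Sum>y\<in>?U. \<Sum>z\<in>?U. d x z) - (\<Sum>x\<in>?U. \<Sum>y\<in>?U. \<Sum>z\<in>?U. d y z)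
       + (\<Sum>x\<in>?U. \<Sum>y\<in>?U. \<Sum>z\<in>?U. d x y * d x z) + (\<Sum>x\<in>?U. \<Sum>y\<in>?U. \<Sum>z\<in>?U. d x y * d y z)
       + (\<Sum>x\<in>?U. \<Sum>y\<in>?U. \<Sum>z\<in>?U. d x z * d y z) - (\<Sum>x\<in>?U. \<Sum>y\<in>?U. \<Sum>z\<in>?U. d x y * (d x z * d y z))"
    by (simp only: id sum_subtractf sum.distrib)
  also have "\<dots> = N^3 - N^2*M - N^2*M - N^2*M + N*M^2 + N*M^2 + N*M^2 - N*M*R"
    by (simp only: T1 T2 T3 T4 T5 T6 T7 T8)
  also have "\<dots> = N^3 - 3 * N^2 * M + 3 * N * M^2 - N * M * R"
    by (simp add: algebra_simps)
  finally show ?thesis .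
qed



definition Tri :: "nat \<Rightarrow> nat set set" where
  "Tri n = {T. T \<subseteq> {0..<n} \<and> card T = 3}"

lemma finite_Tri: "finite (Tri n)"
  unfolding Tri_def by (rule finite_subset[of _ "Pow {0..<n}"]) auto

lemma card_Tri: "card (Tri n) = n choose 3"
  unfolding Tri_def using n_subsets[of "{0..<n}" 3] by simp

lemma triangles_sum:
  "real (triangles n adj) = (\<Sum>T\<in>Tri n. of_bool (\<forall>x\<in>T. \<forall>y\<in>T. x \<noteq> y \<longrightarrow> adj x y))"
proof -
  have "Tri n \<inter> {T. \<forall>x\<in>T. \<forall>y\<in>T. x \<noteq> y \<longrightarrow> adj x y} =
        {T. T \<subseteq> {0..<n} \<and> card T = 3 \<and> (\<forall>x\<in>T. \<forall>y\<in>T. x \<noteq> y \<longrightarrow> adj x y)}"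
    unfolding Tri_def by auto
  then show ?thesis using finite_Tri[of n] unfolding triangles_def by simp
qed

lemma ET_general:
  fixes M :: "'a pmf"
  assumes fin: "finite (set_pmf M)"
    and c: "\<And>T. T \<in> Tri n \<Longrightarrow>
       measure_pmf.expectation M (\<lambda>\<omega>. of_bool (\<forall>x\<in>T. \<forall>y\<in>T. x \<noteq> y \<longrightarrow> adj \<omega> x y)) = c"
  shows "measure_pmf.expectation M (\<lambda>\<omega>. real (triangles n (adj \<omega>))) = real (n choose 3) * c"
proof -
  have "measure_pmf.expectation M (\<lambda>\<omega>. real (triangles n (adj \<omega>))) =
        measure_pmf.expectation M (\<lambda>\<omega>. \<Sum>T\<in>Tri n. of_bool (\<forall>x\<in>T. \<forall>y\<in>T. x \<noteq> y \<longrightarrow> adj \<omega> x y))"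
    by (simp only: triangles_sum)
  also have "\<dots> = (\<Sum>T\<in>Tri n. measure_pmf.expectation M (\<lambda>\<omega>. of_bool (\<forall>x\<in>T. \<forall>y\<in>T. x \<noteq> y \<longrightarrow> adj \<omega> x y)))"
    by (rule Bochner_Integration.integral_sum) (rule integrable_measure_pmf_finite[OF fin])
  also have "\<dots> = (\<Sum>T\<in>Tri n. c)" using c by simp
  finally show ?thesis by (simp add: card_Tri)
qed

lemma marg_insert:
  assumes "finite B" "x \<notin> B" "\<And>f y. g (f(x := y)) = g f"
  shows "map_pmf (\<lambda>f. (f x, g f)) (Pi_pmf (insert x B) d p) = pair_pmf (p x) (map_pmf g (Pi_pmf B d p))"
proof -
  have "map_pmf (\<lambda>f. (f x, g f)) (Pi_pmf (insert x B) d p) =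
        map_pmf (\<lambda>(y, f). (id y, g f)) (pair_pmf (p x) (Pi_pmf B d p))"
    using assms by (simp add: Pi_pmf_insert pmf.map_comp o_def case_prod_unfold)
  also have "\<dots> = pair_pmf (p x) (map_pmf g (Pi_pmf B d p))"
    unfolding map_pair by (simp add: pmf.map_ident)
  finally show ?thesis .
qed

lemma marg3:
  assumes "finite A" "a \<in> A" "b \<in> A" "c \<in> A" "a \<noteq> b" "a \<noteq> c" "b \<noteq> c"
  shows "map_pmf (\<lambda>f. (f a, f b, f c)) (Pi_pmf A d p) = pair_pmf (p a) (pair_pmf (p b) (p c))"
proof -
  define B where "B = A - {a}"
  define C where "C = B - {b}"
  have A: "A = insert a B" and aB: "a \<notin> B" and fB: "finite B" using assms by (auto simp: B_def)
  have B: "B = insert b C" and bC: "b \<notin> C" and fC: "finite C" "c \<in> C"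
    using assms by (auto simp: B_def C_def)
  have "map_pmf (\<lambda>f. (f a, f b, f c)) (Pi_pmf A d p) = pair_pmf (p a) (map_pmf (\<lambda>f. (f b, f c)) (Pi_pmf B d p))"
    unfolding A using assms by (intro marg_insert fB aB) auto
  also have "map_pmf (\<lambda>f. (f b, f c)) (Pi_pmf B d p) = pair_pmf (p b) (map_pmf (\<lambda>f. f c) (Pi_pmf C d p))"
    unfolding B using assms by (intro marg_insert fC bC) auto
  also have "map_pmf (\<lambda>f. f c) (Pi_pmf C d p) = p c"
    using Pi_pmf_component[OF fC(1), of c d p] fC(2) by simp
  finally show ?thesis .
qed



lemma key_pmf_UU: "key_pmf n K P = Pi_pmf {0..<n} {} (\<lambda>_. pmf_of_set (UU K P))"
  unfolding key_pmf_def UU_def ..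

lemma finite_key: "K \<le> P \<Longrightarrow> finite (set_pmf (key_pmf n K P))"
  unfolding key_pmf_UU using finite_UU UU_ne
  by (subst set_Pi_pmf) (auto intro!: finite_PiE_dflt)

lemma pair_integral:
  fixes \<Phi> :: "nat set \<Rightarrow> nat set \<Rightarrow> nat set \<Rightarrow> real"
  assumes "K \<le> P"
  defines "\<mu> \<equiv> pmf_of_set (UU K P)"
  shows "measure_pmf.expectation (pair_pmf \<mu> (pair_pmf \<mu> \<mu>)) (\<lambda>(x,y,z). \<Phi> x y z)
     = (\<Sum>x\<in>UU K P. \<Sum>y\<in>UU K P. \<Sum>z\<in>UU K P. \<Phi> x y z) / real (P choose K) ^ 3"
proof -
  let ?U = "UU K P"
  have ne: "?U \<noteq> {}" and fU: "finite ?U" using UU_ne[OF assms(1)] finite_UU by auto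
  have "measure_pmf.expectation (pair_pmf \<mu> (pair_pmf \<mu> \<mu>)) (\<lambda>(x,y,z). \<Phi> x y z)
      = (\<Sum>t\<in>?U \<times> (?U \<times> ?U). (\<lambda>(x,y,z). \<Phi> x y z) t * pmf (pair_pmf \<mu> (pair_pmf \<mu> \<mu>)) t)"
    by (rule integral_measure_pmf_real) (use fU ne in \<open>auto simp: \<mu>_def\<close>)
  also have "\<dots> = (\<Sum>t\<in>?U \<times> (?U \<times> ?U). (\<lambda>(x,y,z). \<Phi> x y z / real (P choose K) ^ 3) t)"
  proof (intro sum.cong refl)
    fix t assume "t \<in> ?U \<times> (?U \<times> ?U)"
    then obtain x y z where t: "t = (x,y,z)" "x \<in> ?U" "y \<in> ?U" "z \<in> ?U" by auto
    have pm: "pmf \<mu> w = 1 / real (P choose K)" if "w \<in> ?U" for w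
      using that fU ne by (simp add: \<mu>_def card_UU)
    show "(\<lambda>(x,y,z). \<Phi> x y z) t * pmf (pair_pmf \<mu> (pair_pmf \<mu> \<mu>)) t = (\<lambda>(x,y,z). \<Phi> x y z / real (P choose K) ^ 3) t"
      using t by (simp add: pmf_pair pm power3_eq_cube)
  qed
  also have "\<dots> = (\<Sum>x\<in>?U. \<Sum>y\<in>?U. \<Sum>z\<in>?U. \<Phi> x y z / real (P choose K) ^ 3)"
    by (simp add: sum.cartesian_product)
  also have "\<dots> = (\<Sum>x\<in>?U. \<Sum>y\<in>?U. \<Sum>z\<in>?U. \<Phi> x y z) / real (P choose K) ^ 3"
    by (simp add: sum_divide_distrib)
  finally show ?thesis .
qed

lemma key_tri:
  assumes KP: "K \<le> P" and T: "T \<in> Tri n"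
  shows "measure_pmf.expectation (key_pmf n K P)
           (\<lambda>f. of_bool (\<forall>x\<in>T. \<forall>y\<in>T. x \<noteq> y \<longrightarrow> rkg_adj f x y))
       = (\<Sum>x\<in>UU K P. \<Sum>y\<in>UU K P. \<Sum>z\<in>UU K P.
           of_bool (x \<inter> y \<noteq> {} \<and> x \<inter> z \<noteq> {} \<and> y \<inter> z \<noteq> {}) :: real) / real (P choose K) ^ 3"
proof -
  obtain a b c where abc: "T = {a,b,c}" "a \<noteq> b" "b \<noteq> c" "a \<noteq> c"
    using T unfolding Tri_def by (auto simp: card_3_iff)
  have sub: "a \<in> {0..<n}" "b \<in> {0..<n}" "c \<in> {0..<n}" using T abc unfolding Tri_def by auto
  define \<Phi> where "\<Phi> = (\<lambda>(x::nat set,y::nat set,z::nat set). of_bool (x \<inter> y \<noteq> {} \<and> x \<inter> z \<noteq> {} \<and> y \<inter> z \<noteq> {}) :: real)"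
  have eq: "(of_bool (\<forall>x\<in>T. \<forall>y\<in>T. x \<noteq> y \<longrightarrow> rkg_adj f x y) :: real) = \<Phi> (f a, f b, f c)" for f
    using abc unfolding \<Phi>_def rkg_adj_def by (auto simp: Int_commute)
  have "measure_pmf.expectation (key_pmf n K P)
           (\<lambda>f. of_bool (\<forall>x\<in>T. \<forall>y\<in>T. x \<noteq> y \<longrightarrow> rkg_adj f x y))
      = measure_pmf.expectation (key_pmf n K P) (\<lambda>f. \<Phi> (f a, f b, f c))"
    by (simp only: eq)
  also have "\<dots> = measure_pmf.expectation (map_pmf (\<lambda>f. (f a, f b, f c)) (key_pmf n K P)) \<Phi>"
    by simp
  also have "map_pmf (\<lambda>f. (f a, f b, f c)) (key_pmf n K P) =
      pair_pmf (pmf_of_set (UU K P)) (pair_pmf (pmf_of_set (UU K P)) (pmf_of_set (UU K P)))"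
    unfolding key_pmf_UU using abc sub by (intro marg3) auto
  also have "measure_pmf.expectation \<dots> \<Phi> = (\<Sum>x\<in>UU K P. \<Sum>y\<in>UU K P. \<Sum>z\<in>UU K P.
           of_bool (x \<inter> y \<noteq> {} \<and> x \<inter> z \<noteq> {} \<and> y \<inter> z \<noteq> {}) :: real) / real (P choose K) ^ 3"
    using pair_integral[OF KP, of "\<lambda>x y z. of_bool (x \<inter> y \<noteq> {} \<and> x \<inter> z \<noteq> {} \<and> y \<inter> z \<noteq> {})"]
    unfolding \<Phi>_def by simp
  finally show ?thesis .
qed

lemma er_tri:
  fixes p :: real
  assumes p: "0 \<le> p" "p \<le> 1" and T: "T \<in> Tri n"
  shows "measure_pmf.expectation (er_pmf n p)
           (\<lambda>g. of_bool (\<forall>x\<in>T. \<forall>y\<in>T. x \<noteq> y \<longrightarrow> er_adj g x y)) = p ^ 3"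
proof -
  obtain a b c where abc: "T = {a,b,c}" "a \<noteq> b" "b \<noteq> c" "a \<noteq> c"
    using T unfolding Tri_def by (auto simp: card_3_iff)
  have sub: "a \<in> {0..<n}" "b \<in> {0..<n}" "c \<in> {0..<n}" using T abc unfolding Tri_def by auto
  define E2 where "E2 = {e. e \<subseteq> {0..<n} \<and> card e = (2::nat)}"
  define Ed :: "nat set set" where "Ed = {{a,b},{a,c},{b,c}}"
  have fE2: "finite E2" unfolding E2_def by (rule finite_subset[of _ "Pow {0..<n}"]) auto
  have EdE2: "Ed \<subseteq> E2" using sub abc unfolding E2_def Ed_def by auto
  have d1: "{a,b} \<noteq> {a,c}" "{a,b} \<noteq> {b,c}" "{a,c} \<noteq> {b,c}" using abc by (auto simp: doubleton_eq_iff)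
  have cEd: "card Ed = 3" unfolding Ed_def using d1 by simp
  define h where "h = (\<lambda>e (v::bool). if e \<in> Ed then of_bool v else (1::real))"
  have eq: "(of_bool (\<forall>x\<in>T. \<forall>y\<in>T. x \<noteq> y \<longrightarrow> er_adj g x y) :: real) = (\<Prod>e\<in>E2. h e (g e))" for g
  proof -
    have "(\<Prod>e\<in>E2. h e (g e)) = (\<Prod>e\<in>{e\<in>E2. e \<in> Ed}. of_bool (g e))"
      unfolding h_def by (rule prod.inter_filter[OF fE2, symmetric])
    also have "{e\<in>E2. e \<in> Ed} = Ed" using EdE2 by auto
    also have "(\<Prod>e\<in>Ed. of_bool (g e) :: real) = of_bool (g {a,b} \<and> g {a,c} \<and> g {b,c})"
      unfolding Ed_def using d1 by simp
    also have "(g {a,b} \<and> g {a,c} \<and> g {b,c}) = (\<forall>x\<in>T. \<forall>y\<in>T. x \<noteq> y \<longrightarrow> er_adj g x y)"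
      using abc unfolding er_adj_def by (auto simp: insert_commute)
    finally show ?thesis by simp
  qed
  have "measure_pmf.expectation (er_pmf n p) (\<lambda>g. of_bool (\<forall>x\<in>T. \<forall>y\<in>T. x \<noteq> y \<longrightarrow> er_adj g x y))
      = measure_pmf.expectation (Pi_pmf E2 False (\<lambda>_. bernoulli_pmf p)) (\<lambda>g. \<Prod>e\<in>E2. h e (g e))"
    unfolding er_pmf_def E2_def[symmetric] by (simp only: eq)
  also have "\<dots> = (\<Prod>e\<in>E2. measure_pmf.expectation (bernoulli_pmf p) (h e))"
    by (rule expectation_prod_Pi_pmf[OF fE2])
       (auto intro!: integrable_measure_pmf_finite simp: h_def)
  also have "\<dots> = (\<Prod>e\<in>E2. if e \<in> Ed then p else 1)"
    using p by (intro prod.cong refl) (simp add: h_def)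
  also have "\<dots> = (\<Prod>e\<in>{e\<in>E2. e \<in> Ed}. p)" by (rule prod.inter_filter[OF fE2, symmetric])
  also have "{e\<in>E2. e \<in> Ed} = Ed" using EdE2 by auto
  finally show ?thesis using cEd by simp
qed



lemma choose_real: "real (m choose K) = (\<Prod>i=0..<K. real m - real i) / fact K"
  by (simp add: binomial_gbinomial gbinomial_prod_rev)

lemma logconc:
  assumes "0 < K" "3 * K \<le> P"
  shows "real ((P - 2*K) choose K) * real (P choose K) < real ((P - K) choose K) ^ 2"
proof -
  define a where "a = real (P - K)"
  have h1: "real (P - 2*K) = a - K" and h2: "real P = a + K" using assms by (auto simp: a_def)
  have aK: "a \<ge> 2 * K" using assms by (simp add: a_def)
  have "(\<Prod>i=0..<K. (a - K - real i) * (a + K - real i)) < (\<Prod>i=0..<K. (a - real i)^2)"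
  proof (rule prod_mono_strict[of 0])
    show "(a - K - real 0) * (a + K - real 0) < (a - real 0)^2"
      using assms by (simp add: power2_eq_square algebra_simps)
    fix i assume "i \<in> {0..<K}"
    then have iK: "real i < K" by simp
    show "0 \<le> (a - K - real i) * (a + K - real i) \<and> (a - K - real i) * (a + K - real i) \<le> (a - real i)^2"
    proof (intro conjI)
      show "0 \<le> (a - K - real i) * (a + K - real i)" using aK iK by (intro mult_nonneg_nonneg) auto
      have "(a - K - real i) * (a + K - real i) = (a - real i)^2 - (real K)^2"
        by (simp add: power2_eq_square algebra_simps)
      then show "(a - K - real i) * (a + K - real i) \<le> (a - real i)^2" by simp
    qed
    show "0 < (a - real i)^2" using aK \<open>real i < K\<close> assms by simp
  qed (use assms in auto)
  then have "(\<Prod>i=0..<K. a - K - real i) * (\<Prod>i=0..<K. a + K - real i) < (\<Prod>i=0..<K. a - real i)^2"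
    by (simp add: prod.distrib power2_eq_square)
  then have "(\<Prod>i=0..<K. a - K - real i) * (\<Prod>i=0..<K. a + K - real i) / (fact K)^2 < (\<Prod>i=0..<K. a - real i)^2 / (fact K)^2"
    by (intro divide_strict_right_mono) auto
  moreover have e1: "real ((P - 2*K) choose K) = (\<Prod>i=0..<K. a - K - real i) / fact K"
    unfolding choose_real h1 ..
  moreover have e2: "real (P choose K) = (\<Prod>i=0..<K. a + K - real i) / fact K"
    unfolding choose_real h2 ..
  moreover have e3: "real ((P - K) choose K) = (\<Prod>i=0..<K. a - real i) / fact K"
    unfolding choose_real a_def ..
  moreover have "(X / f) * (Y / f) = X * Y / f^2" for X Y f :: real
    by (simp add: power2_eq_square)
  ultimately show ?thesis by (simp only: power_divide)
qed



theorem mainTheorem16: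
  fixes K P n :: nat
  assumes "0 < K" "K \<le> P" "p_rkg K P > 0" "n \<ge> 3"
  shows "ET_rkg n K P / ET_er n (p_rkg K P) = CK_rkg K P / p_rkg K P
       \<and> CK_rkg K P / p_rkg K P
           = 1 + (q_rkg K P ^ 2 - r_rkg K P) / (1 - q_rkg K P) ^ 3 * q_rkg K P
       \<and> CK_rkg K P / p_rkg K P \<ge> 1
       \<and> (CK_rkg K P / p_rkg K P = 1 \<longleftrightarrow> P < 2 * K)
       \<and> (2 * K \<le> P \<and> P < 3 * K \<longrightarrow>
            ET_rkg n K P / ET_er n (p_rkg K P) = 1 + (q_rkg K P / (1 - q_rkg K P)) ^ 3)"
proof -
  define N where "N = real (P choose K)"
  define M where "M = real ((P - K) choose K)"
  define R where "R = real ((P - 2*K) choose K)"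
  define q where "q = q_rkg K P"
  define r where "r = r_rkg K P"
  define p where "p = p_rkg K P"
  define \<beta> where "\<beta> = beta_rkg K P"
  have Npos: "N > 0" using assms(2) by (simp add: N_def)
  have qv: "q = M / N"
  proof (cases "2 * K \<le> P")
    case False then have "P - K < K" by auto
    then show ?thesis using False by (simp add: q_def q_rkg_def M_def)
  qed (simp add: q_def q_rkg_def M_def N_def)
  have rv: "r = R / N"
  proof (cases "3 * K \<le> P")
    case False then have "P - 2*K < K" by auto
    then show ?thesis using False by (simp add: r_def r_rkg_def R_def)
  qed (simp add: r_def r_rkg_def R_def N_def)
  have pq: "p = 1 - q" by (simp add: p_def q_def p_rkg_def)
  have q0: "q \<ge> 0" using Npos by (simp add: qv M_def)
  have ppos: "p > 0" using assms(3) by (simp add: p_def)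
  have p1: "p \<le> 1" using q0 pq by simp
  have \<beta>v: "\<beta> = (1 - q)^3 + q^3 - q * r" by (simp add: \<beta>_def beta_rkg_def q_def r_def)
  have Tpos: "real (n choose 3) > 0" using assms(4) by simp
  have ETk: "ET_rkg n K P = real (n choose 3) * \<beta>"
  proof -
    have "ET_rkg n K P = real (n choose 3) * ((N^3 - 3 * N^2 * M + 3 * N * M^2 - N * M * R) / N^3)"
      unfolding ET_rkg_def
      by (rule ET_general[OF finite_key[OF assms(2)]])
         (simp only: key_tri[OF assms(2)] count_main N_def M_def R_def)
    also have "(N^3 - 3 * N^2 * M + 3 * N * M^2 - N * M * R) / N^3 = \<beta>"
      unfolding \<beta>v qv rv using Npos by (simp add: field_simps power2_eq_square power3_eq_cube)
    finally show ?thesis .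
  qed
  have ETe: "ET_er n p = real (n choose 3) * p^3"
  proof -
    have fin: "finite {e. e \<subseteq> {0..<n} \<and> card e = (2::nat)}"
      by (rule finite_subset[of _ "Pow {0..<n}"]) auto
    have "finite (set_pmf (er_pmf n p))"
      unfolding er_pmf_def using fin by (subst set_Pi_pmf) (auto intro!: finite_PiE_dflt)
    then show ?thesis unfolding ET_er_def
      by (rule ET_general) (rule er_tri, use ppos p1 in auto)
  qed
  have CKv: "CK_rkg K P / p = \<beta> / p^3"
    using ppos by (simp add: CK_rkg_def \<beta>_def[symmetric] q_def[symmetric] pq[symmetric] power3_eq_cube power2_eq_square)
  have ratio: "ET_rkg n K P / ET_er n p = \<beta> / p^3"
    using Tpos ppos by (simp add: ETk ETe)
  have c2: "\<beta> / p^3 = 1 + (q^2 - r) / (1 - q)^3 * q"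
  proof -
    have nz: "(1 - q)^3 \<noteq> 0" using ppos pq by simp
    have "\<beta> / p^3 = ((1 - q)^3 + (q^3 - q * r)) / (1 - q)^3" unfolding \<beta>v pq by simp
    also have "\<dots> = 1 + (q^3 - q * r) / (1 - q)^3" using nz by (simp add: add_divide_distrib)
    also have "q^3 - q * r = (q^2 - r) * q" by (simp add: power2_eq_square power3_eq_cube algebra_simps)
    finally show ?thesis by simp
  qed
  have A1: "q^2 > r" if "3 * K \<le> P"
  proof -
    have "R * N < M^2" using logconc[OF assms(1) that] by (simp add: R_def N_def M_def)
    then have "R * N / N^2 < M^2 / N^2" using Npos by (intro divide_strict_right_mono) auto
    then show ?thesis using Npos by (simp add: qv rv power2_eq_square)
  qed
  have A2: "r = 0" if "\<not> 3 * K \<le> P" using that by (simp add: r_def r_rkg_def)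
  have A3: "q > 0" if "2 * K \<le> P"
  proof -
    have "M > 0" using that by (simp add: M_def)
    then show ?thesis using Npos qv by simp
  qed
  have qr: "q^2 \<ge> r"
    using A1 A2 by (cases "3 * K \<le> P") (auto intro: less_imp_le)
  have qrs: "q^2 > r" if "2 * K \<le> P"
    using A1 A2 A3[OF that] by (cases "3 * K \<le> P") auto
  have c3: "\<beta> / p^3 \<ge> 1"
    unfolding c2 pq[symmetric] using qr q0 ppos by (simp add: mult_nonneg_nonneg)
  have c4: "\<beta> / p^3 = 1 \<longleftrightarrow> P < 2 * K"
  proof
    assume "P < 2 * K"
    then have "q = 0" by (simp add: q_def q_rkg_def)
    then show "\<beta> / p^3 = 1" unfolding c2 by simp
  next
    assume h: "\<beta> / p^3 = 1"
    show "P < 2 * K"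
    proof (rule ccontr)
      assume "\<not> P < 2 * K"
      then have "2 * K \<le> P" by simp
      then have "q^2 > r" "q > 0" using qrs q0 qv Npos by (auto simp: M_def)
      then have "(q^2 - r) / (1 - q)^3 * q > 0" using ppos pq by simp
      then show False using h c2 by linarith
    qed
  qed
  have c5: "2 * K \<le> P \<and> P < 3 * K \<longrightarrow> \<beta> / p^3 = 1 + (q / (1 - q))^3"
  proof
    assume "2 * K \<le> P \<and> P < 3 * K"
    then have "r = 0" by (simp add: r_def r_rkg_def)
    then show "\<beta> / p^3 = 1 + (q / (1 - q))^3"
      unfolding c2 by (simp add: power_divide power2_eq_square power3_eq_cube)
  qed
  show ?thesis
    unfolding p_def[symmetric] q_def[symmetric] r_def[symmetric]
    using ratio CKv c2 c3 c4 c5 by simp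
qed

end
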